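(* Let $g:\mathbb{R}^d\times\mathbb{R}^d\to\mathbb{R}^d$ and $R>0$ satisfy: (i) there exists $L_{g,R}\ge0$ such that $\|g(x,z_1)-g(x,z_2)\|\le L_{g,R}\|z_1-z_2\|$ for all $z_1,z_2,x\in\mathbb{R}^d$ with $\|x\|\le R$; (ii) there exist $C_{R,0},C_{R,1}\ge0$ such that $\|g(x,z)\|\le C_{R,0}+C_{R,1}\|z\|$ for all $x,z$ with $\|x\|\le R$. Let $b\in\mathbb{R}$ with $|b|>C_{R,1}$ and $f^g(x,z)=bz+g(x,z)$, $f^g_x=f^g(x,\cdot)$. Then for every $M>0$, with $\tilde M=(M+C_{R,0})/(|b|-C_{R,1})$: there exists $L\ge0$ such that $f^g_x$ is $L$-Lipschitz for every $x\in B(0,R)$, and $B(0,M)\subset f^g_x(B(0,\tilde M))$ for every $x\in B(0,R)$.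
   Context: $B(x,r)$ denotes the Euclidean ball centered at $x$ of radius $r$. *)

theory Defs
  imports "HOL-Analysis.Analysis"
begin

definition fg :: "real \<Rightarrow> ('a::euclidean_space \<Rightarrow> 'a \<Rightarrow> 'a) \<Rightarrow> 'a \<Rightarrow> 'a \<Rightarrow> 'a" where
  "fg b g x z = b *\<^sub>R z + g x z"

end

theory Submission
  imports Defs
begin

theorem proposition11:
  fixes g :: "'a::euclidean_space \<Rightarrow> 'a \<Rightarrow> 'a" and R C0 C1 b :: real
  assumes "R > 0"
    and "\<exists>Lg\<ge>0. \<forall>x z1 z2. norm x \<le> R \<longrightarrow> norm (g x z1 - g x z2) \<le> Lg * norm (z1 - z2)"
    and "C0 \<ge> 0" and "C1 \<ge> 0"
    and "\<forall>x z. norm x \<le> R \<longrightarrow> norm (g x z) \<le> C0 + C1 * norm z"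
    and "\<bar>b\<bar> > C1"
  shows "\<forall>M>0. (\<exists>L\<ge>0. \<forall>x\<in>ball 0 R. L-lipschitz_on UNIV (fg b g x))
              \<and> (\<forall>x\<in>ball 0 R. ball 0 M \<subseteq> fg b g x ` ball 0 ((M + C0) / (\<bar>b\<bar> - C1)))"
proof (intro allI impI conjI)
  obtain Lg where Lg0: "Lg \<ge> 0" and Lg: "\<And>x z1 z2. norm x \<le> R \<Longrightarrow> norm (g x z1 - g x z2) \<le> Lg * norm (z1 - z2)"
    using assms(2) by blast
  have glip: "Lg-lipschitz_on UNIV (g x)" if "norm x \<le> R" for x
    by (rule lipschitz_onI) (use Lg[OF that] Lg0 in \<open>auto simp: dist_norm\<close>)
  fix M :: real assume M: "M > 0"
  show "\<exists>L\<ge>0. \<forall>x\<in>ball 0 R. L-lipschitz_on UNIV (fg b g x)"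
  proof (intro exI[of _ "\<bar>b\<bar> + Lg"] conjI ballI)
    show "0 \<le> \<bar>b\<bar> + Lg" using Lg0 by simp
    fix x :: 'a assume "x \<in> ball 0 R"
    then have xR: "norm x \<le> R" by simp
    show "(\<bar>b\<bar> + Lg)-lipschitz_on UNIV (fg b g x)"
    proof (rule lipschitz_onI)
      fix z1 z2 :: 'a
      have "dist (fg b g x z1) (fg b g x z2) = norm (b *\<^sub>R (z1 - z2) + (g x z1 - g x z2))"
        by (simp add: fg_def dist_norm algebra_simps)
      also have "\<dots> \<le> norm (b *\<^sub>R (z1 - z2)) + norm (g x z1 - g x z2)" by (rule norm_triangle_ineq)
      also have "\<dots> \<le> \<bar>b\<bar> * norm (z1 - z2) + Lg * norm (z1 - z2)" using Lg[OF xR, of z1 z2] by simp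
      finally show "dist (fg b g x z1) (fg b g x z2) \<le> (\<bar>b\<bar> + Lg) * dist z1 z2"
        by (simp add: dist_norm algebra_simps)
    qed (use Lg0 in simp)
  qed
  show "\<forall>x\<in>ball 0 R. ball 0 M \<subseteq> fg b g x ` ball 0 ((M + C0) / (\<bar>b\<bar> - C1))"
  proof (intro ballI subsetI)
    fix x y :: 'a assume "x \<in> ball 0 R" "y \<in> ball 0 M"
    then have xR: "norm x \<le> R" and yM: "norm y < M" by auto
    define T where "T = (M + C0) / (\<bar>b\<bar> - C1)"
    have bpos: "\<bar>b\<bar> - C1 > 0" using assms(6) by simp
    have bnz: "b \<noteq> 0" using assms(4,6) by auto
    have TMC: "T * (\<bar>b\<bar> - C1) = M + C0" unfolding T_def using bpos by simp
    have Tpos: "T \<ge> 0" unfolding T_def using bpos M assms(3) by simp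
    define h where "h z = (1 / b) *\<^sub>R (y - g x z)" for z
    have gc: "continuous_on UNIV (g x)" by (rule lipschitz_on_continuous_on[OF glip[OF xR]])
    have hc: "continuous_on (cball 0 T) h"
      unfolding h_def by (intro continuous_intros continuous_on_subset[OF gc]) auto
    have hn: "norm (h z) * \<bar>b\<bar> \<le> norm y + C0 + C1 * norm z" for z
    proof -
      have "norm (h z) * \<bar>b\<bar> = norm (y - g x z)" unfolding h_def using bnz by simp
      also have "\<dots> \<le> norm y + norm (g x z)" by (rule norm_triangle_ineq4)
      also have "\<dots> \<le> norm y + C0 + C1 * norm z" using assms(5) xR by auto
      finally show ?thesis .
    qed
    have him: "h \<in> cball 0 T \<rightarrow> cball 0 T"
    proof
      fix z :: 'a assume "z \<in> cball 0 T"
      then have zT: "norm z \<le> T" by simp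
      have "C1 * norm z \<le> C1 * T" using zT assms(4) by (simp add: mult_left_mono)
      then have "norm (h z) * \<bar>b\<bar> \<le> T * \<bar>b\<bar>" using hn[of z] yM TMC by (simp add: algebra_simps)
      then have "norm (h z) \<le> T" using bnz by simp
      then show "h z \<in> cball 0 T" by simp
    qed
    obtain z where zT: "z \<in> cball 0 T" and hz: "h z = z"
      using brouwer[OF compact_cball convex_cball _ hc him] Tpos by auto
    have "norm z * \<bar>b\<bar> < M + C0 + C1 * norm z" using hn[of z] hz yM by simp
    then have "norm z * (\<bar>b\<bar> - C1) < T * (\<bar>b\<bar> - C1)" using TMC by (simp add: algebra_simps)
    then have "norm z < T" using bpos by simp
    moreover have "fg b g x z = y"
    proof -
      have "b *\<^sub>R z = b *\<^sub>R ((1 / b) *\<^sub>R (y - g x z))" using hz unfolding h_def by simp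
      also have "\<dots> = y - g x z" using bnz by simp
      finally have "b *\<^sub>R z = y - g x z" .
      then show ?thesis by (simp add: fg_def)
    qed
    ultimately show "y \<in> fg b g x ` ball 0 ((M + C0) / (\<bar>b\<bar> - C1))"
      unfolding T_def by (intro image_eqI[of _ _ z]) auto
  qed
qed

end
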